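(* Let $m,n$ be coprime positive integers with $\sqrt3 < m/n \le 3$, let $p = m^2-3n^2$, $r = 2mn$, $q = m^2+3n^2$, and let $\theta\in[\pi/3,\pi/2)$ be the angle with $\cos\theta = p/q$, $\sin\theta = \frac{r}{q}\sqrt3$. Then the lattice $$\Omega_\theta = \begin{bmatrix} m & m \\ n\sqrt3 & -n\sqrt3\end{bmatrix}\mathbb{Z}^2$$ belongs to $\mathrm{WR}(\Lambda_h)$, and satisfies $|\Omega_\theta| = q$, $\det(\Omega_\theta) = r\sqrt3$, $|\Lambda_h:\Omega_\theta| = 2r$, and $\Omega_\theta \in C_h(\theta)$. Hence $C_h(\theta)$ is the set of all lattices in $\mathrm{WR}(\Lambda_h)$ similar to $\Omega_\theta$.
   Context: $\Lambda_h = \begin{bmatrix} 1 & -1/2 \\ 0 & \sqrt3/2\end{bmatrix}\mathbb{Z}^2$ is the hexagonal lattice. For a full-rank lattice $\Gamma = A\mathbb{Z}^2\subset\mathbb{R}^2$, $\det\Gamma = |\det A|$, $|\Gamma| = \min\{\|y\|^2 : y\in\Gamma\setminus\{0\}\}$, and for $\Gamma\subseteq\Lambda_h$, $|\Lambda_h:\Gamma| = \det\Gamma/\det\Lambda_h$. $\Gamma$ is well-rounded (WR) if it has a basis of vectors of squared norm $|\Gamma|$ (a minimal basis); such a basis can be chosen with angle in $[\pi/3,\pi/2]$ between its vectors, and this angle $\theta(\Gamma)$ is an invariant of $\Gamma$. $\mathrm{WR}(\Lambda_h)$ is the set of full-rank WR sublattices of $\Lambda_h$, and $C_h(\theta) =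 \{\Omega\in\mathrm{WR}(\Lambda_h) : \theta(\Omega)=\theta\}$. Lattices $\Gamma_1,\Gamma_2$ are similar if $\Gamma_2=\alpha A\Gamma_1$ for some nonzero real $\alpha$ and $A\in O_2(\mathbb{R})$. *)

theory Defs
  imports "HOL-Analysis.Analysis"
begin

definition vec2 :: "real \<Rightarrow> real \<Rightarrow> real^2" where
  "vec2 a b = vector [a, b]"

definition lattice_gen :: "real^2 \<Rightarrow> real^2 \<Rightarrow> (real^2) set" where
  "lattice_gen u v = {of_int a *\<^sub>R u + of_int b *\<^sub>R v | a b. True}"

definition det2 :: "real^2 \<Rightarrow> real^2 \<Rightarrow> real" where
  "det2 u v = u$1 * v$2 - u$2 * v$1"

definition is_lattice_basis :: "(real^2) set \<Rightarrow> real^2 \<Rightarrow> real^2 \<Rightarrow> bool" where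
  "is_lattice_basis L u v \<longleftrightarrow> det2 u v \<noteq> 0 \<and> L = lattice_gen u v"

definition full_rank_lattice :: "(real^2) set \<Rightarrow> bool" where
  "full_rank_lattice L \<longleftrightarrow> (\<exists>u v. is_lattice_basis L u v)"

definition lattice_det :: "(real^2) set \<Rightarrow> real" where
  "lattice_det L = (THE d. \<exists>u v. is_lattice_basis L u v \<and> d = \<bar>det2 u v\<bar>)"

text \<open>|Gamma| = minimal squared norm of a nonzero vector.\<close>
definition lattice_min :: "(real^2) set \<Rightarrow> real" where
  "lattice_min L = Inf {(norm y)\<^sup>2 | y. y \<in> L \<and> y \<noteq> 0}"

definition vec_angle :: "real^2 \<Rightarrow> real^2 \<Rightarrow> real" where
  "vec_angle u v = arccos ((u \<bullet> v) / (norm u * norm v))"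

definition minimal_basis :: "(real^2) set \<Rightarrow> real^2 \<Rightarrow> real^2 \<Rightarrow> bool" where
  "minimal_basis L u v \<longleftrightarrow> is_lattice_basis L u v \<and>
     (norm u)\<^sup>2 = lattice_min L \<and> (norm v)\<^sup>2 = lattice_min L"

definition well_rounded :: "(real^2) set \<Rightarrow> bool" where
  "well_rounded L \<longleftrightarrow> full_rank_lattice L \<and> (\<exists>u v. minimal_basis L u v)"

definition wr_angle :: "(real^2) set \<Rightarrow> real" where
  "wr_angle L = (THE t. \<exists>u v. minimal_basis L u v \<and> t = vec_angle u v
                        \<and> pi/3 \<le> t \<and> t \<le> pi/2)"

definition hex_lattice :: "(real^2) set" where
  "hex_lattice = lattice_gen (vec2 1 0) (vec2 (-1/2) (sqrt 3 / 2))"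

definition lattice_index :: "(real^2) set \<Rightarrow> (real^2) set \<Rightarrow> real" where
  "lattice_index L G = lattice_det G / lattice_det L"

definition WR_hex :: "(real^2) set set" where
  "WR_hex = {L. full_rank_lattice L \<and> L \<subseteq> hex_lattice \<and> well_rounded L}"

definition C_hex :: "real \<Rightarrow> (real^2) set set" where
  "C_hex t = {L \<in> WR_hex. wr_angle L = t}"

definition similar_lattices :: "(real^2) set \<Rightarrow> (real^2) set \<Rightarrow> bool" where
  "similar_lattices L1 L2 \<longleftrightarrow>
     (\<exists>\<alpha> A. \<alpha> \<noteq> 0 \<and> orthogonal_transformation A \<and> L2 = (\<lambda>x. \<alpha> *\<^sub>R A x) ` L1)"

end

theory Submission imports Defs begin

lemma inner2: "(z::real^2) \<bullet> w = z$1*w$1 + z$2*w$2"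
  by (simp add: inner_vec_def sum_2)

lemma normsq2: "(norm (z::real^2))^2 = z$1^2 + z$2^2"
  unfolding power2_norm_eq_inner inner2 by (simp add: power2_eq_square)

lemma vec2_eq_iff: "(z::real^2) = w \<longleftrightarrow> z$1 = w$1 \<and> z$2 = w$2"
  by (simp add: vec_eq_iff forall_2)

lemma lagrange2: "(det2 u v)^2 + (u \<bullet> v)^2 = (norm u)^2 * (norm v)^2"
  unfolding normsq2 by (simp add: det2_def inner2 power2_eq_square algebra_simps)

lemma det2_lin: "det2 (a *\<^sub>R u + b *\<^sub>R v) (c *\<^sub>R u + d *\<^sub>R v) = (a*d - b*c) * det2 u v"
  by (simp add: det2_def algebra_simps)

lemma int_unit: "(k::int) * k' = 1 \<Longrightarrow> \<bar>k\<bar> = 1"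
  by (auto simp: zmult_eq_1_iff)

lemma gen_mem1: "u \<in> lattice_gen u v"
proof -
  have "u = of_int 1 *\<^sub>R u + of_int 0 *\<^sub>R v" by simp
  thus ?thesis unfolding lattice_gen_def by blast
qed

lemma gen_mem2: "v \<in> lattice_gen u v"
proof -
  have "v = of_int 0 *\<^sub>R u + of_int 1 *\<^sub>R v" by simp
  thus ?thesis unfolding lattice_gen_def by blast
qed

lemma det_unique:
  assumes "is_lattice_basis L u v" "is_lattice_basis L x y"
  shows "\<bar>det2 x y\<bar> = \<bar>det2 u v\<bar>"
proof -
  have D1: "det2 u v \<noteq> 0" and L1: "L = lattice_gen u v" using assms(1) by (auto simp: is_lattice_basis_def)
  have D2: "det2 x y \<noteq> 0" and L2: "L = lattice_gen x y" using assms(2) by (auto simp: is_lattice_basis_def)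
  have "x \<in> L" unfolding L2 by (rule gen_mem1)
  then obtain a b :: int where x: "x = of_int a *\<^sub>R u + of_int b *\<^sub>R v" unfolding L1 lattice_gen_def by auto
  have "y \<in> L" unfolding L2 by (rule gen_mem2)
  then obtain c d :: int where y: "y = of_int c *\<^sub>R u + of_int d *\<^sub>R v" unfolding L1 lattice_gen_def by auto
  have "u \<in> L" unfolding L1 by (rule gen_mem1)
  then obtain a' b' :: int where u: "u = of_int a' *\<^sub>R x + of_int b' *\<^sub>R y" unfolding L2 lattice_gen_def by auto
  have "v \<in> L" unfolding L1 by (rule gen_mem2)
  then obtain c' d' :: int where v: "v = of_int c' *\<^sub>R x + of_int d' *\<^sub>R y" unfolding L2 lattice_gen_def by auto
  have e1: "det2 x y = of_int (a*d - b*c) * det2 u v" unfolding x y det2_lin by simp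
  have e2: "det2 u v = of_int (a'*d' - b'*c') * det2 x y" unfolding u v det2_lin by simp
  have "det2 u v = of_int ((a'*d' - b'*c') * (a*d - b*c)) * det2 u v"
    using e2 unfolding e1 by (simp add: mult.assoc)
  hence "(of_int ((a'*d' - b'*c') * (a*d - b*c)) - 1) * det2 u v = (0::real)"
    by (simp add: algebra_simps)
  hence "of_int ((a'*d' - b'*c') * (a*d - b*c)) = (1::real)" using D1 by simp
  hence "(a'*d' - b'*c') * (a*d - b*c) = 1" by (simp only: of_int_eq_1_iff)
  hence "(a*d - b*c) * (a'*d' - b'*c') = 1" by (simp add: mult.commute)
  hence "\<bar>a*d - b*c\<bar> = 1" by (rule int_unit)
  hence "\<bar>real_of_int (a*d - b*c)\<bar> = 1" by (metis of_int_1 of_int_abs)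
  thus ?thesis using e1 by (simp add: abs_mult)
qed

lemma lattice_det_eq: "is_lattice_basis L u v \<Longrightarrow> lattice_det L = \<bar>det2 u v\<bar>"
  unfolding lattice_det_def
  by (rule the_equality) (auto dest: det_unique)

lemma min_lower: "y \<in> L \<Longrightarrow> y \<noteq> 0 \<Longrightarrow> lattice_min L \<le> (norm y)^2"
  unfolding lattice_min_def by (rule cInf_lower) (auto intro: bdd_belowI[of _ 0])

lemma int_sq0: "(x::int) \<ge> 0 \<Longrightarrow> y \<ge> 0 \<Longrightarrow> y \<le> x \<Longrightarrow> x \<noteq> 0 \<Longrightarrow> x*x + y*y - x*y \<ge> 1"
proof -
  assume h: "x \<ge> 0" "y \<ge> 0" "y \<le> x" "x \<noteq> 0"
  have "x*y \<le> x*x" using h by (simp add: mult_left_mono)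
  moreover have "y*y \<ge> 1 \<or> y = 0"
  proof (cases "y = 0")
    case False
    hence "1 \<le> y" using h by linarith
    thus ?thesis using mult_mono[of 1 y 1 y] by simp
  qed simp
  moreover have "x*x \<ge> 1"
  proof -
    have "1 \<le> x" using h by linarith
    thus ?thesis using mult_mono[of 1 x 1 x] by simp
  qed
  ultimately show ?thesis by auto
qed

lemma int_sq: "(a::int, b) \<noteq> (0,0) \<Longrightarrow> a*a + b*b - \<bar>a*b\<bar> \<ge> 1"
proof -
  assume h: "(a, b) \<noteq> (0,0)"
  have e: "a*a + b*b - \<bar>a*b\<bar> = \<bar>a\<bar>*\<bar>a\<bar> + \<bar>b\<bar>*\<bar>b\<bar> - \<bar>a\<bar>*\<bar>b\<bar>"
    by (simp add: abs_mult)
  show ?thesis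
  proof (cases "\<bar>b\<bar> \<le> \<bar>a\<bar>")
    case True
    hence "\<bar>a\<bar> \<noteq> 0" using h by auto
    thus ?thesis unfolding e using int_sq0[of "\<bar>a\<bar>" "\<bar>b\<bar>"] True by simp
  next
    case False
    hence "\<bar>b\<bar> \<noteq> 0" by auto
    thus ?thesis unfolding e using int_sq0[of "\<bar>b\<bar>" "\<bar>a\<bar>"] False by (simp add: algebra_simps)
  qed
qed


lemma det2_zero1: "det2 0 v = 0" by (simp add: det2_def)
lemma det2_zero2: "det2 u 0 = 0" by (simp add: det2_def)

lemma bil: "(a *\<^sub>R p + b *\<^sub>R q) \<bullet> (c *\<^sub>R p + d *\<^sub>R q) =
   a*c*(p \<bullet> p) + (a*d + b*c)*(p \<bullet> q) + b*d*(q \<bullet> q)"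
  by (simp add: inner_add_left inner_add_right inner_commute algebra_simps)

lemma wr_basis:
  assumes D: "det2 u v \<noteq> 0" and N: "norm v = norm u" and I: "2*\<bar>u \<bullet> v\<bar> \<le> (norm u)^2"
  shows "lattice_min (lattice_gen u v) = (norm u)^2"
proof -
  let ?s = "(norm u)^2"
  have u0: "u \<noteq> 0" using D det2_zero1 by metis
  have uu: "u \<bullet> u = ?s" "v \<bullet> v = ?s" by (metis N power2_norm_eq_inner)+
  have low: "?s \<le> (norm y)^2" if yin: "y \<in> lattice_gen u v" and yn: "y \<noteq> 0" for y
  proof -
    obtain a b :: int where y: "y = of_int a *\<^sub>R u + of_int b *\<^sub>R v" using yin unfolding lattice_gen_def by auto
    have ab: "(a,b) \<noteq> (0,0)" using yn y by auto
    have "(norm y)^2 = y \<bullet> y" by (rule power2_norm_eq_inner)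
    also have "\<dots> = real_of_int a * a * ?s + (real_of_int a * b + real_of_int b * a) * (u \<bullet> v) + real_of_int b * b * ?s"
      unfolding y bil uu by simp
    also have "\<dots> = (real_of_int a * a + real_of_int b * b) * ?s + 2 * (real_of_int a * b) * (u \<bullet> v)"
      by (simp add: algebra_simps)
    finally have e: "(norm y)^2 = (real_of_int a * a + real_of_int b * b) * ?s + 2 * (real_of_int a * b) * (u \<bullet> v)" .
    have "\<bar>2 * (real_of_int a * b) * (u \<bullet> v)\<bar> = \<bar>real_of_int a * b\<bar> * (2 * \<bar>u \<bullet> v\<bar>)"
      by (simp add: abs_mult)
    also have "\<dots> \<le> \<bar>real_of_int a * b\<bar> * ?s" using I by (simp add: mult_left_mono)
    finally have t: "- (\<bar>real_of_int a * b\<bar> * ?s) \<le> 2 * (real_of_int a * b) * (u \<bullet> v)" by linarith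
    have "1 \<le> real_of_int (a*a + b*b - \<bar>a*b\<bar>)" using int_sq[OF ab] by linarith
    hence "1 * ?s \<le> real_of_int (a*a + b*b - \<bar>a*b\<bar>) * ?s" by (intro mult_right_mono) auto
    hence "?s \<le> (real_of_int a * a + real_of_int b * b) * ?s - \<bar>real_of_int a * b\<bar> * ?s"
      by (simp add: algebra_simps)
    thus ?thesis using e t by linarith
  qed
  show ?thesis unfolding lattice_min_def
    by (rule cInf_eq_minimum) (use low u0 gen_mem1[of u v] in auto)
qed

lemma wr_basis2:
  assumes D: "det2 u v \<noteq> 0" and N: "norm v = norm u" and I: "2*\<bar>u \<bullet> v\<bar> \<le> (norm u)^2"
  shows "minimal_basis (lattice_gen u v) u v" "well_rounded (lattice_gen u v)" "full_rank_lattice (lattice_gen u v)"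
proof -
  show m: "minimal_basis (lattice_gen u v) u v"
    using wr_basis[OF assms] D N by (simp add: minimal_basis_def is_lattice_basis_def)
  show f: "full_rank_lattice (lattice_gen u v)"
    using D by (auto simp: full_rank_lattice_def is_lattice_basis_def)
  show "well_rounded (lattice_gen u v)" using m f by (auto simp: well_rounded_def)
qed

lemma cos_angle: "u \<noteq> 0 \<Longrightarrow> v \<noteq> 0 \<Longrightarrow> cos (vec_angle u v) = (u \<bullet> v) / (norm u * norm v)"
proof -
  assume "u \<noteq> 0" "v \<noteq> 0"
  hence p: "norm u * norm v > 0" by simp
  have "\<bar>u \<bullet> v\<bar> \<le> norm u * norm v" by (rule Cauchy_Schwarz_ineq2)
  hence "-1 \<le> (u \<bullet> v) / (norm u * norm v)" "(u \<bullet> v) / (norm u * norm v) \<le> 1"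
    using p by (auto simp: divide_simps abs_le_iff)
  thus ?thesis unfolding vec_angle_def by simp
qed

lemma minb_facts:
  assumes "minimal_basis L u v"
  shows "det2 u v \<noteq> 0" "L = lattice_gen u v" "(norm u)^2 = lattice_min L" "(norm v)^2 = lattice_min L"
    "u \<noteq> 0" "v \<noteq> 0" "norm v = norm u" "lattice_min L > 0"
proof -
  show d: "det2 u v \<noteq> 0" "L = lattice_gen u v" "(norm u)^2 = lattice_min L" "(norm v)^2 = lattice_min L"
    using assms by (auto simp: minimal_basis_def is_lattice_basis_def)
  show u: "u \<noteq> 0" using d(1) det2_zero1 by metis
  show "v \<noteq> 0" using d(1) det2_zero2 by metis
  show "norm v = norm u" using d(3,4) by (metis norm_ge_zero power2_eq_iff_nonneg)
  show "lattice_min L > 0" using d(3) u by (metis zero_less_norm_iff zero_less_power)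
qed

lemma wr_angle_eq:
  assumes mb: "minimal_basis L u v" and h0: "0 \<le> u \<bullet> v" and h1: "2*(u \<bullet> v) \<le> (norm u)^2"
  shows "wr_angle L = vec_angle u v"
proof -
  note F = minb_facts[OF mb]
  let ?s = "lattice_min L"
  have nn: "norm u * norm v = ?s" using F by (simp add: power2_eq_square)
  have va: "vec_angle u v = arccos ((u \<bullet> v) / ?s)" unfolding vec_angle_def nn ..
  have c0: "0 \<le> (u \<bullet> v) / ?s" using h0 F by simp
  have c1: "(u \<bullet> v) / ?s \<le> 1/2" using h1 F by (simp add: divide_simps)
  have r1: "pi/3 \<le> vec_angle u v" unfolding va
    using arccos_le_arccos[of "(u \<bullet> v) / ?s" "1/2"] c0 c1 by simp
  have r2: "vec_angle u v \<le> pi/2" unfolding va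
    using arccos_le_arccos[of 0 "(u \<bullet> v) / ?s"] c0 c1 by simp
  show ?thesis unfolding wr_angle_def
  proof (rule the_equality)
    show "\<exists>x y. minimal_basis L x y \<and> vec_angle u v = vec_angle x y \<and> pi / 3 \<le> vec_angle u v \<and> vec_angle u v \<le> pi / 2"
      using mb r1 r2 by blast
  next
    fix t assume "\<exists>x y. minimal_basis L x y \<and> t = vec_angle x y \<and> pi / 3 \<le> t \<and> t \<le> pi / 2"
    then obtain x y where mb2: "minimal_basis L x y" and t: "t = vec_angle x y" "pi / 3 \<le> t" "t \<le> pi / 2" by blast
    note G = minb_facts[OF mb2]
    have nn2: "norm x * norm y = ?s" using G by (simp add: power2_eq_square)
    have "cos t = (x \<bullet> y) / ?s" using cos_angle[OF G(5,6)] t(1) nn2 by simp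
    hence "x \<bullet> y = cos t * ?s" using G(8) by simp
    moreover have "0 \<le> cos t" using t by (intro cos_ge_zero) auto
    ultimately have g0: "0 \<le> x \<bullet> y" using G(8) by simp
    have dd: "\<bar>det2 x y\<bar> = \<bar>det2 u v\<bar>"
      using det_unique mb mb2 unfolding minimal_basis_def by blast
    have "(det2 x y)^2 = (det2 u v)^2" using dd by (metis power2_abs)
    hence "(x \<bullet> y)^2 = (u \<bullet> v)^2" using lagrange2[of x y] lagrange2[of u v] F G by simp
    hence "x \<bullet> y = u \<bullet> v" using g0 h0 by simp
    thus "t = vec_angle u v" using t(1) unfolding vec_angle_def nn nn2 by simp
  qed
qed

lemma gen_neg: "lattice_gen u (-v) = lattice_gen u v"
proof -
  have 1: "\<exists>a b. x = of_int a *\<^sub>R u + of_int b *\<^sub>R v'" if "x = of_int a *\<^sub>R u + of_int b *\<^sub>R (-v')" for x a b v'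
    using that by (intro exI[of _ a] exI[of _ "-b"]) simp
  have 2: "\<exists>a b. x = of_int a *\<^sub>R u + of_int b *\<^sub>R (-v')" if "x = of_int a *\<^sub>R u + of_int b *\<^sub>R v'" for x a b v'
    using that by (intro exI[of _ a] exI[of _ "-b"]) simp
  show ?thesis unfolding lattice_gen_def using 1 2 by blast
qed

lemma gen_diff: "u - v \<in> lattice_gen u v"
proof -
  have "u - v = of_int 1 *\<^sub>R u + of_int (-1) *\<^sub>R v" by simp
  thus ?thesis unfolding lattice_gen_def by blast
qed

lemma gen_sum: "u + v \<in> lattice_gen u v"
proof -
  have "u + v = of_int 1 *\<^sub>R u + of_int 1 *\<^sub>R v" by simp
  thus ?thesis unfolding lattice_gen_def by blast
qed

lemma wr_exists:
  assumes "well_rounded L"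
  shows "\<exists>u v. minimal_basis L u v \<and> 0 \<le> u \<bullet> v \<and> 2*(u \<bullet> v) \<le> (norm u)^2"
proof -
  obtain u v where mb: "minimal_basis L u v" using assms by (auto simp: well_rounded_def)
  note F = minb_facts[OF mb]
  let ?s = "lattice_min L"
  have "u - v \<noteq> 0" using F(1) by (auto simp: det2_def)
  hence "?s \<le> (norm (u - v))^2" using min_lower gen_diff F(2) by metis
  moreover have "(norm (u - v))^2 = 2*?s - 2*(u \<bullet> v)"
    using F(3,4) by (simp add: power2_norm_eq_inner inner_diff_left inner_diff_right inner_commute)
  ultimately have a: "2*(u \<bullet> v) \<le> ?s" by linarith
  have "u + v \<noteq> 0" using F(1) by (auto simp: det2_def add_eq_0_iff)
  hence "?s \<le> (norm (u + v))^2" using min_lower gen_sum F(2) by metis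
  moreover have "(norm (u + v))^2 = 2*?s + 2*(u \<bullet> v)"
    using F(3,4) by (simp add: power2_norm_eq_inner inner_add_left inner_add_right inner_commute)
  ultimately have b: "- 2*(u \<bullet> v) \<le> ?s" by linarith
  show ?thesis
  proof (cases "0 \<le> u \<bullet> v")
    case True thus ?thesis using mb a F(3) by (intro exI[of _ u] exI[of _ v]) auto
  next
    case False
    have "minimal_basis L u (-v)" using mb F(1) gen_neg[of u v]
      by (auto simp: minimal_basis_def is_lattice_basis_def det2_def)
    thus ?thesis using False b F(3) by (intro exI[of _ u] exI[of _ "-v"]) auto
  qed
qed


lemma gen_image:
  assumes "linear f"
  shows "f ` lattice_gen u v = lattice_gen (f u) (f v)"
proof -
  have e: "f (of_int a *\<^sub>R u + of_int b *\<^sub>R v) = of_int a *\<^sub>R f u + of_int b *\<^sub>R f v" for a b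
    using assms by (simp add: linear_iff)
  show ?thesis
  proof
    show "f ` lattice_gen u v \<subseteq> lattice_gen (f u) (f v)"
      unfolding lattice_gen_def using e by auto
  next
    show "lattice_gen (f u) (f v) \<subseteq> f ` lattice_gen u v"
    proof
      fix z assume "z \<in> lattice_gen (f u) (f v)"
      then obtain a b :: int where z: "z = of_int a *\<^sub>R f u + of_int b *\<^sub>R f v"
        unfolding lattice_gen_def by auto
      have "of_int a *\<^sub>R u + of_int b *\<^sub>R v \<in> lattice_gen u v" unfolding lattice_gen_def by blast
      thus "z \<in> f ` lattice_gen u v" using z e by (metis image_eqI)
    qed
  qed
qed

lemma det2_add1: "det2 (z + w) v = det2 z v + det2 w v" by (simp add: det2_def algebra_simps)
lemma det2_add2: "det2 u (z + w) = det2 u z + det2 u w" by (simp add: det2_def algebra_simps)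
lemma det2_sc1: "det2 (r *\<^sub>R z) v = r * det2 z v" by (simp add: det2_def algebra_simps)
lemma det2_sc2: "det2 u (r *\<^sub>R z) = r * det2 u z" by (simp add: det2_def algebra_simps)
lemma det2_self: "det2 u u = 0" by (simp add: det2_def algebra_simps)

lemma sim_to:
  assumes D: "det2 u v \<noteq> 0" and N: "norm v = norm u" and Nx: "norm y = norm x" and x0: "x \<noteq> 0"
    and dot: "(x \<bullet> y) * (norm u)^2 = (u \<bullet> v) * (norm x)^2"
  shows "similar_lattices (lattice_gen u v) (lattice_gen x y)"
proof -
  have u0: "u \<noteq> 0" using D det2_zero1 by metis
  define \<alpha> where "\<alpha> = norm x / norm u"
  have ap: "\<alpha> > 0" using u0 x0 by (simp add: \<alpha>_def)
  have anx: "\<alpha> * norm u = norm x" using u0 by (simp add: \<alpha>_def)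
  define c1 where "c1 z = det2 z v / det2 u v" for z
  define c2 where "c2 z = det2 u z / det2 u v" for z
  define g where "g z = c1 z *\<^sub>R x + c2 z *\<^sub>R y" for z
  define A where "A z = (1/\<alpha>) *\<^sub>R g z" for z
  have dec: "z = c1 z *\<^sub>R u + c2 z *\<^sub>R v" for z
  proof -
    have k1: "det2 z v * u$1 + det2 u z * v$1 = z$1 * det2 u v" by (simp add: det2_def algebra_simps)
    have k2: "det2 z v * u$2 + det2 u z * v$2 = z$2 * det2 u v" by (simp add: det2_def algebra_simps)
    have "(c1 z *\<^sub>R u + c2 z *\<^sub>R v)$1 = (det2 z v * u$1 + det2 u z * v$1) / det2 u v"
      by (simp add: c1_def c2_def add_divide_distrib)
    also have "\<dots> = z$1" unfolding k1 using D by simp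
    finally have 1: "(c1 z *\<^sub>R u + c2 z *\<^sub>R v)$1 = z$1" .
    have "(c1 z *\<^sub>R u + c2 z *\<^sub>R v)$2 = (det2 z v * u$2 + det2 u z * v$2) / det2 u v"
      by (simp add: c1_def c2_def add_divide_distrib)
    also have "\<dots> = z$2" unfolding k2 using D by simp
    finally have 2: "(c1 z *\<^sub>R u + c2 z *\<^sub>R v)$2 = z$2" .
    show ?thesis using 1 2 by (simp add: vec2_eq_iff)
  qed
  have c1a: "c1 (z + w) = c1 z + c1 w" "c1 (r *\<^sub>R z) = r * c1 z" for z w r
    by (simp_all add: c1_def det2_add1 det2_sc1 add_divide_distrib)
  have c2a: "c2 (z + w) = c2 z + c2 w" "c2 (r *\<^sub>R z) = r * c2 z" for z w r
    by (simp_all add: c2_def det2_add2 det2_sc2 add_divide_distrib)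
  have lg: "linear g"
  proof (rule linearI)
    fix z w show "g (z + w) = g z + g w" by (simp add: g_def c1a c2a scaleR_add_left)
  next
    fix r z show "g (r *\<^sub>R z) = r *\<^sub>R g z" by (simp add: g_def c1a c2a scaleR_add_right)
  qed
  have lA: "linear A"
    by (rule linearI) (simp_all add: A_def linear_iff[THEN iffD1, OF lg] scaleR_add_right)
  have nx2: "(norm x)^2 = \<alpha>^2 * (norm u)^2" unfolding anx[symmetric] by (simp add: power_mult_distrib)
  have xx: "x \<bullet> x = \<alpha>^2 * (u \<bullet> u)"
    using nx2 by (simp add: power2_norm_eq_inner)
  have yy: "y \<bullet> y = \<alpha>^2 * (v \<bullet> v)"
  proof -
    have "y \<bullet> y = (norm y)^2" by (simp add: power2_norm_eq_inner)
    also have "\<dots> = \<alpha>^2 * (norm v)^2" using Nx N nx2 by simp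
    also have "\<dots> = \<alpha>^2 * (v \<bullet> v)" by (simp add: power2_norm_eq_inner)
    finally show ?thesis .
  qed
  have xy: "x \<bullet> y = \<alpha>^2 * (u \<bullet> v)"
  proof -
    have "(x \<bullet> y) * (norm u)^2 = (\<alpha>^2 * (u \<bullet> v)) * (norm u)^2"
      using dot unfolding nx2 by (simp add: algebra_simps)
    thus ?thesis using u0 by simp
  qed
  have ip: "A z \<bullet> A w = z \<bullet> w" for z w
  proof -
    have 1: "A z \<bullet> A w = (1/\<alpha>)^2 * (g z \<bullet> g w)"
      by (simp add: A_def power2_eq_square)
    have 2: "g z \<bullet> g w = \<alpha>^2 * ((c1 z *\<^sub>R u + c2 z *\<^sub>R v) \<bullet> (c1 w *\<^sub>R u + c2 w *\<^sub>R v))"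
      unfolding g_def bil xx yy xy by (simp add: algebra_simps)
    have 3: "(c1 z *\<^sub>R u + c2 z *\<^sub>R v) \<bullet> (c1 w *\<^sub>R u + c2 w *\<^sub>R v) = z \<bullet> w"
      by (simp only: dec[symmetric])
    have "A z \<bullet> A w = (1/\<alpha>)^2 * (\<alpha>^2 * (z \<bullet> w))" unfolding 1 2 3 ..
    thus ?thesis using ap by (simp add: power2_eq_square)
  qed
  have oA: "orthogonal_transformation A"
    using lA ip by (simp add: orthogonal_transformation_def)
  have fg: "(\<lambda>z. \<alpha> *\<^sub>R A z) = g" using ap by (simp add: A_def fun_eq_iff)
  have gu: "g u = x" by (simp add: g_def c1_def c2_def det2_self D)
  have gv: "g v = y" by (simp add: g_def c1_def c2_def det2_self D)
  have "lattice_gen x y = (\<lambda>z. \<alpha> *\<^sub>R A z) ` lattice_gen u v"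
    unfolding fg gen_image[OF lg] gu gv ..
  thus ?thesis unfolding similar_lattices_def using ap oA
    by (intro exI[of _ \<alpha>] exI[of _ A]) simp
qed

lemma sim_from:
  assumes D: "det2 u v \<noteq> 0" and a0: "\<alpha> \<noteq> 0" and oA: "orthogonal_transformation A"
  defines "f \<equiv> \<lambda>z. \<alpha> *\<^sub>R A z"
  shows "(\<lambda>z. \<alpha> *\<^sub>R A z) ` lattice_gen u v = lattice_gen (f u) (f v)"
    and "f u \<bullet> f v = \<alpha>^2 * (u \<bullet> v)" "(norm (f u))^2 = \<alpha>^2 * (norm u)^2"
    "(norm (f v))^2 = \<alpha>^2 * (norm v)^2" "det2 (f u) (f v) \<noteq> 0"
proof -
  have lA: "linear A" and ip: "\<And>z w. A z \<bullet> A w = z \<bullet> w" using oA by (auto simp: orthogonal_transformation_def)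
  have lf: "linear f" unfolding f_def using lA by (simp add: linear_iff scaleR_add_right)
  show "(\<lambda>z. \<alpha> *\<^sub>R A z) ` lattice_gen u v = lattice_gen (f u) (f v)"
    using gen_image[OF lf] unfolding f_def .
  have fi: "f z \<bullet> f w = \<alpha>^2 * (z \<bullet> w)" for z w by (simp add: f_def ip power2_eq_square)
  show 1: "f u \<bullet> f v = \<alpha>^2 * (u \<bullet> v)" by (rule fi)
  show 2: "(norm (f u))^2 = \<alpha>^2 * (norm u)^2" by (simp add: power2_norm_eq_inner fi)
  show 3: "(norm (f v))^2 = \<alpha>^2 * (norm v)^2" by (simp add: power2_norm_eq_inner fi)
  have "(det2 (f u) (f v))^2 = (\<alpha>^2)^2 * (det2 u v)^2"
  proof -
    have "(det2 (f u) (f v))^2 = (norm (f u))^2 * (norm (f v))^2 - (f u \<bullet> f v)^2"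
      using lagrange2[of "f u" "f v"] by linarith
    also have "\<dots> = (\<alpha>^2)^2 * ((norm u)^2 * (norm v)^2 - (u \<bullet> v)^2)"
      unfolding 1 2 3 by (simp add: algebra_simps power2_eq_square)
    also have "(norm u)^2 * (norm v)^2 - (u \<bullet> v)^2 = (det2 u v)^2"
      using lagrange2[of u v] by linarith
    finally show ?thesis .
  qed
  thus "det2 (f u) (f v) \<noteq> 0" using D a0 by auto
qed


lemma vec2_c [simp]: "vec2 a b $ 1 = a" "vec2 a b $ 2 = b"
  by (simp_all add: vec2_def)

lemma hex_det: "lattice_det hex_lattice = sqrt 3 / 2"
proof -
  have "is_lattice_basis hex_lattice (vec2 1 0) (vec2 (-1/2) (sqrt 3 / 2))"
    by (simp add: is_lattice_basis_def hex_lattice_def det2_def)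
  from lattice_det_eq[OF this] show ?thesis by (simp add: det2_def)
qed

theorem lemma3p2:
  fixes m n :: nat and \<theta> :: real
  assumes "m > 0" "n > 0" "coprime m n"
    and "sqrt 3 < real m / real n" "real m / real n \<le> 3"
    and "pi/3 \<le> \<theta>" "\<theta> < pi/2"
    and "cos \<theta> = (real m ^ 2 - 3 * real n ^ 2) / (real m ^ 2 + 3 * real n ^ 2)"
    and "sin \<theta> = (2 * real m * real n) / (real m ^ 2 + 3 * real n ^ 2) * sqrt 3"
  shows "let p = real m ^ 2 - 3 * real n ^ 2; r = 2 * real m * real n;
             q = real m ^ 2 + 3 * real n ^ 2;
             \<Omega> = lattice_gen (vec2 (real m) (real n * sqrt 3)) (vec2 (real m) (- real n * sqrt 3))
         in \<Omega> \<in> WR_hex \<and> lattice_min \<Omega> = q \<and> lattice_det \<Omega> = r * sqrt 3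
            \<and> lattice_index hex_lattice \<Omega> = 2 * r \<and> \<Omega> \<in> C_hex \<theta>
            \<and> C_hex \<theta> = {\<Gamma> \<in> WR_hex. similar_lattices \<Omega> \<Gamma>}"
proof -
  define u where "u = vec2 (real m) (real n * sqrt 3)"
  define v where "v = vec2 (real m) (- real n * sqrt 3)"
  define P where "P = real m ^ 2 - 3 * real n ^ 2"
  define Q where "Q = real m ^ 2 + 3 * real n ^ 2"
  have s3: "sqrt 3 ^ 2 = 3" by simp
  have n0: "real n > 0" "real m > 0" using assms(1,2) by auto
  have "sqrt 3 * real n < real m" using assms(4) n0 by (simp add: pos_less_divide_eq)
  hence "(sqrt 3 * real n)^2 < (real m)^2" using n0 by (intro power_strict_mono) auto
  hence P0: "P > 0" unfolding P_def by (simp add: power_mult_distrib)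
  have "real m \<le> 3 * real n" using assms(5) n0 by (simp add: pos_divide_le_eq)
  hence "(real m)^2 \<le> (3 * real n)^2" using n0 by (intro power_mono) auto
  hence PQ: "2 * P \<le> Q" unfolding P_def Q_def by (simp add: power_mult_distrib)
  have Qp: "Q > 0" unfolding Q_def using n0 by (intro add_pos_nonneg) auto
  have nu: "(norm u)^2 = Q" unfolding normsq2 u_def Q_def by (simp add: power_mult_distrib)
  have nv: "(norm v)^2 = Q" unfolding normsq2 v_def Q_def by (simp add: power_mult_distrib)
  have N: "norm v = norm u" using nu nv by (metis norm_ge_zero power2_eq_iff_nonneg)
  have uv: "u \<bullet> v = P" unfolding inner2 u_def v_def P_def
    by (simp add: power2_eq_square algebra_simps)
  have det: "det2 u v = - (2 * real m * real n * sqrt 3)" unfolding det2_def u_def v_def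
    by (simp add: algebra_simps)
  have D: "det2 u v \<noteq> 0" unfolding det using n0 by simp
  have I: "2*\<bar>u \<bullet> v\<bar> \<le> (norm u)^2" unfolding uv nu using P0 PQ by simp
  note W = wr_basis[OF D N I] wr_basis2[OF D N I]
  let ?O = "lattice_gen u v"
  have sub: "?O \<subseteq> hex_lattice"
  proof
    fix z assume "z \<in> ?O"
    then obtain a b :: int where z: "z = of_int a *\<^sub>R u + of_int b *\<^sub>R v" unfolding lattice_gen_def by auto
    define A where "A = a * (int m + int n) + b * (int m - int n)"
    define B where "B = 2 * int n * (a - b)"
    have "z = of_int A *\<^sub>R vec2 1 0 + of_int B *\<^sub>R vec2 (-1/2) (sqrt 3 / 2)"
      unfolding vec2_eq_iff z u_def v_def A_def B_def by (simp add: algebra_simps)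
    thus "z \<in> hex_lattice" unfolding hex_lattice_def lattice_gen_def by blast
  qed
  have WR: "?O \<in> WR_hex" using W sub by (simp add: WR_hex_def)
  have ldet: "lattice_det ?O = 2 * real m * real n * sqrt 3"
  proof -
    have "lattice_det ?O = \<bar>det2 u v\<bar>" using D by (intro lattice_det_eq) (simp add: is_lattice_basis_def)
    also have "\<dots> = 2 * real m * real n * sqrt 3" unfolding det using n0 by simp
    finally show ?thesis .
  qed
  have idx: "lattice_index hex_lattice ?O = 2 * (2 * real m * real n)"
    unfolding lattice_index_def ldet hex_det by simp
  have nn: "norm u * norm v = Q" using nu N by (simp add: power2_eq_square)
  have th: "\<theta> = arccos (P / Q)"
    using arccos_cos[of \<theta>] assms(6,7,8) unfolding P_def Q_def by simp
  have wrO: "wr_angle ?O = \<theta>"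
  proof -
    have "wr_angle ?O = vec_angle u v"
      by (rule wr_angle_eq) (use W P0 PQ uv nu in auto)
    also have "\<dots> = \<theta>" unfolding vec_angle_def nn uv th ..
    finally show ?thesis .
  qed
  have CO: "?O \<in> C_hex \<theta>" using WR wrO by (simp add: C_hex_def)
  have C: "C_hex \<theta> = {\<Gamma> \<in> WR_hex. similar_lattices ?O \<Gamma>}"
  proof (intro set_eqI iffI)
    fix G assume "G \<in> C_hex \<theta>"
    hence GW: "G \<in> WR_hex" and Ga: "wr_angle G = \<theta>" by (auto simp: C_hex_def)
    hence "well_rounded G" by (simp add: WR_hex_def)
    then obtain x y where mb: "minimal_basis G x y" and h0: "0 \<le> x \<bullet> y" and h1: "2*(x \<bullet> y) \<le> (norm x)^2"
      using wr_exists by blast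
    note F = minb_facts[OF mb]
    have "vec_angle x y = \<theta>" using wr_angle_eq[OF mb h0 h1] Ga by simp
    hence "cos \<theta> = (x \<bullet> y) / (norm x * norm y)" using cos_angle[OF F(5,6)] by simp
    moreover have "norm x * norm y = (norm x)^2" using F(7) by (simp add: power2_eq_square)
    ultimately have "(x \<bullet> y) / (norm x)^2 = P / Q" using assms(8) unfolding P_def Q_def by simp
    hence dot: "(x \<bullet> y) * (norm u)^2 = (u \<bullet> v) * (norm x)^2"
      unfolding nu uv using Qp F(5) by (simp add: divide_simps)
    have "similar_lattices ?O (lattice_gen x y)"
      by (rule sim_to[OF D N F(7) F(5) dot])
    thus "G \<in> {\<Gamma> \<in> WR_hex. similar_lattices ?O \<Gamma>}" using GW F(2) by simp
  next
    fix G assume "G \<in> {\<Gamma> \<in> WR_hex. similar_lattices ?O \<Gamma>}"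
    hence GW: "G \<in> WR_hex" and "similar_lattices ?O G" by auto
    then obtain \<alpha> A where a0: "\<alpha> \<noteq> 0" and oA: "orthogonal_transformation A"
      and G: "G = (\<lambda>x. \<alpha> *\<^sub>R A x) ` ?O" unfolding similar_lattices_def by blast
    define f where "f = (\<lambda>z. \<alpha> *\<^sub>R A z)"
    have fz: "\<And>z. \<alpha> *\<^sub>R A z = f z" by (simp add: f_def)
    note S = sim_from[OF D a0 oA, unfolded fz]
    have "G = f ` ?O" using G by (simp add: f_def)
    hence G2: "G = lattice_gen (f u) (f v)" using S(1) by simp
    have a2: "\<alpha>^2 > 0" using a0 by simp
    have Nf: "norm (f v) = norm (f u)" using S(3,4) N by (metis norm_ge_zero power2_eq_iff_nonneg)
    have If: "2*\<bar>f u \<bullet> f v\<bar> \<le> (norm (f u))^2" unfolding S(2) S(3) nu uv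
      using P0 PQ a2 by (simp add: abs_mult)
    have mb: "minimal_basis G (f u) (f v)" unfolding G2 by (rule wr_basis2(1)[OF S(5) Nf If])
    have h0: "0 \<le> f u \<bullet> f v" unfolding S(2) uv using P0 a2 by simp
    have h1: "2 * (f u \<bullet> f v) \<le> (norm (f u))^2" using If by simp
    have nnf: "norm (f u) * norm (f v) = \<alpha>^2 * Q" using Nf S(3) nu by (simp add: power2_eq_square)
    have "wr_angle G = vec_angle (f u) (f v)" by (rule wr_angle_eq[OF mb h0 h1])
    also have "\<dots> = arccos ((\<alpha>^2 * P) / (\<alpha>^2 * Q))" unfolding vec_angle_def nnf S(2) uv ..
    also have "\<dots> = \<theta>" unfolding th using a2 by simp
    finally show "G \<in> C_hex \<theta>" using GW by (simp add: C_hex_def)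
  qed
  show ?thesis unfolding Let_def u_def[symmetric] v_def[symmetric]
    using WR W(1) nu ldet idx CO C by (simp add: Q_def)
qed

end
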